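(* Let $\mathcal{X}$ be a probability distribution over a set of queries, $k \geq 1$, and $\hat q_1,\dots,\hat q_k,\hat c_1,\dots,\hat c_k : \mathcal{X} \to \mathbb{R}$ integrable functions, and assume the set $\Lambda$ is finite. Let $0 \leq \lambda_1 < \lambda_2$ and let $s^{(1)} \in S_{\lambda_1}$, $s^{(2)} \in S_{\lambda_2}$ have costs $B_1 = C(s^{(1)})$ and $B_2 = C(s^{(2)})$ respectively. Then for every $B \in [B_2, B_1]$ there exists $\lambda \in [\lambda_1,\lambda_2]$ such that $S_\lambda$ contains a routing strategy $s$ with $C(s) = B$.
   Context: A routing strategy is a measurable function $s : \mathcal{X} \to \mathbb{R}^k$ with $s_i(x) \geq 0$ for all $i$ and $\sum_{i=1}^k s_i(x) = 1$ for all $x$; its cost is $C(s) = \mathbb{E}_{x \sim \mathcal{X}}\left[\sum_{i=1}^k s_i(x)\hat c_i(x)\right]$. For $\lambda \in \mathbb{R}^+$, $S_\lambda$ is the set of routing strategies $s$ such that for all $x \in \mathcal{X}$ and $i \in \{1,\dots,k\}$: if $\hat q_i(x) - \lambda \hat c_i(x) < \max_j(\hat q_j(x) - \lambda \hat c_j(x))$ then $s_i(x) = 0$. $\Lambda$ is the set of $\lambda \in \mathbb{R}$ for which there exist $x \in \mathcal{X}$ and $i \neq j$ with $\hat q_i(x) - \lambda \hat c_i(x) = \hat q_j(x) - \lambda \hat c_j(x)$. *)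

theory Defs
  imports "HOL-Probability.Probability"
begin

text \<open>Models are indexed by 1..k. A routing strategy is a function s :: 'x => nat => real,
  where s x i is the weight of model i on query x.\<close>

definition routing_strategy :: "'x measure \<Rightarrow> nat \<Rightarrow> ('x \<Rightarrow> nat \<Rightarrow> real) \<Rightarrow> bool" where
  "routing_strategy M k s \<longleftrightarrow>
     (\<forall>i\<in>{1..k}. (\<lambda>x. s x i) \<in> borel_measurable M) \<and>
     (\<forall>x\<in>space M. (\<forall>i\<in>{1..k}. 0 \<le> s x i) \<and> (\<Sum>i=1..k. s x i) = 1)"

definition cost :: "'x measure \<Rightarrow> nat \<Rightarrow> (nat \<Rightarrow> 'x \<Rightarrow> real) \<Rightarrow> ('x \<Rightarrow> nat \<Rightarrow> real) \<Rightarrow> real" where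
  "cost M k c s = (\<integral>x. (\<Sum>i=1..k. s x i * c i x) \<partial>M)"

definition S_lam :: "'x measure \<Rightarrow> nat \<Rightarrow> (nat \<Rightarrow> 'x \<Rightarrow> real) \<Rightarrow> (nat \<Rightarrow> 'x \<Rightarrow> real)
    \<Rightarrow> real \<Rightarrow> ('x \<Rightarrow> nat \<Rightarrow> real) set" where
  "S_lam M k q c lam = {s. routing_strategy M k s \<and>
     (\<forall>x\<in>space M. \<forall>i\<in>{1..k}.
        q i x - lam * c i x < (MAX j\<in>{1..k}. q j x - lam * c j x) \<longrightarrow> s x i = 0)}"

definition Lam :: "'x measure \<Rightarrow> nat \<Rightarrow> (nat \<Rightarrow> 'x \<Rightarrow> real) \<Rightarrow> (nat \<Rightarrow> 'x \<Rightarrow> real) \<Rightarrow> real set" where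
  "Lam M k q c = {lam. \<exists>x\<in>space M. \<exists>i\<in>{1..k}. \<exists>j\<in>{1..k}. i \<noteq> j \<and>
     q i x - lam * c i x = q j x - lam * c j x}"

end

theory Submission
  imports Defs
begin

lemma rs_bounds:
  assumes "routing_strategy M k s" "x \<in> space M" "i \<in> {1..k}"
  shows "0 \<le> s x i" "s x i \<le> 1"
proof -
  have nn: "\<forall>j\<in>{1..k}. 0 \<le> s x j" and sm: "(\<Sum>j=1..k. s x j) = 1"
    using assms unfolding routing_strategy_def by auto
  show "0 \<le> s x i" using nn assms(3) by auto
  have "s x i \<le> (\<Sum>j=1..k. s x j)"
    by (rule member_le_sum) (use nn assms(3) in auto)
  then show "s x i \<le> 1" using sm by simp
qed

lemma term_integrable:
  assumes "routing_strategy M k s" "\<forall>i\<in>{1..k}. integrable M (c i)"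
  shows "integrable M (\<lambda>x. \<Sum>i=1..k. s x i * c i x)"
proof (rule Bochner_Integration.integrable_sum)
  fix i assume i: "i \<in> {1..k}"
  show "integrable M (\<lambda>x. s x i * c i x)"
  proof (rule Bochner_Integration.integrable_bound[where f="c i"])
    show "integrable M (c i)" using assms i by auto
    have "(\<lambda>x. s x i) \<in> borel_measurable M" using assms(1) i unfolding routing_strategy_def by auto
    moreover have "c i \<in> borel_measurable M" using assms i by auto
    ultimately show "(\<lambda>x. s x i * c i x) \<in> borel_measurable M" by measurable
    show "AE x in M. norm (s x i * c i x) \<le> norm (c i x)"
    proof (rule AE_I2)
      fix x assume "x \<in> space M"
      then have "0 \<le> s x i" "s x i \<le> 1" using rs_bounds[OF assms(1) _ i] by auto
      then show "norm (s x i * c i x) \<le> norm (c i x)"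
        by (simp add: abs_mult mult_left_le_one_le)
    qed
  qed
qed

lemma S_conv:
  assumes "s \<in> S_lam M k q c lam" "t \<in> S_lam M k q c lam" "0 \<le> u" "u \<le> 1"
  shows "(\<lambda>x i. u * s x i + (1-u) * t x i) \<in> S_lam M k q c lam"
proof -
  have rs: "routing_strategy M k s" "routing_strategy M k t" using assms unfolding S_lam_def by auto
  have "routing_strategy M k (\<lambda>x i. u * s x i + (1-u) * t x i)"
    unfolding routing_strategy_def
  proof (intro conjI ballI)
    fix i assume i: "i \<in> {1..k}"
    have "(\<lambda>x. s x i) \<in> borel_measurable M" "(\<lambda>x. t x i) \<in> borel_measurable M"
      using rs i unfolding routing_strategy_def by auto
    then show "(\<lambda>x. u * s x i + (1-u) * t x i) \<in> borel_measurable M" by measurable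
  next
    fix x assume x: "x \<in> space M"
    fix i assume "i \<in> {1..k}"
    then show "0 \<le> u * s x i + (1 - u) * t x i"
      using rs_bounds[OF rs(1) x] rs_bounds[OF rs(2) x] assms(3,4) by auto
  next
    fix x assume x: "x \<in> space M"
    have "(\<Sum>i=1..k. u * s x i + (1-u) * t x i) = u * (\<Sum>i=1..k. s x i) + (1-u) * (\<Sum>i=1..k. t x i)"
      by (simp add: sum.distrib sum_distrib_left)
    also have "\<dots> = 1" using rs x unfolding routing_strategy_def by auto
    finally show "(\<Sum>i=1..k. u * s x i + (1-u) * t x i) = 1" .
  qed
  then show ?thesis using assms(1,2) unfolding S_lam_def by auto
qed

lemma cost_conv:
  assumes "routing_strategy M k s" "routing_strategy M k t" "\<forall>i\<in>{1..k}. integrable M (c i)"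
  shows "cost M k c (\<lambda>x i. u * s x i + (1-u) * t x i) = u * cost M k c s + (1-u) * cost M k c t"
proof -
  have e: "(\<lambda>x. \<Sum>i=1..k. (u * s x i + (1-u) * t x i) * c i x)
     = (\<lambda>x. u * (\<Sum>i=1..k. s x i * c i x) + (1-u) * (\<Sum>i=1..k. t x i * c i x))"
  proof
    fix x
    have "(\<Sum>i=1..k. (u * s x i + (1-u) * t x i) * c i x) = (\<Sum>i=1..k. u * (s x i * c i x) + (1-u) * (t x i * c i x))"
      by (intro sum.cong) (auto simp: algebra_simps)
    then show "(\<Sum>i=1..k. (u * s x i + (1-u) * t x i) * c i x) = u * (\<Sum>i=1..k. s x i * c i x) + (1-u) * (\<Sum>i=1..k. t x i * c i x)"
      by (simp add: sum.distrib sum_distrib_left)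
  qed
  show ?thesis unfolding cost_def e
    using term_integrable[OF assms(1,3)] term_integrable[OF assms(2,3)] by simp
qed

lemma between_conv:
  assumes "s \<in> S_lam M k q c lam" "t \<in> S_lam M k q c lam" "\<forall>i\<in>{1..k}. integrable M (c i)"
    and "min (cost M k c s) (cost M k c t) \<le> B" "B \<le> max (cost M k c s) (cost M k c t)"
  shows "\<exists>r\<in>S_lam M k q c lam. cost M k c r = B"
proof -
  have rs: "routing_strategy M k s" "routing_strategy M k t" using assms unfolding S_lam_def by auto
  define a where "a = cost M k c s"
  define b where "b = cost M k c t"
  obtain u where u: "0 \<le> u" "u \<le> 1" "u * a + (1-u) * b = B"
  proof (cases "a = b")
    case True then show ?thesis using that[of 1] assms(4,5) unfolding a_def[symmetric] b_def[symmetric] by auto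
  next
    case False
    define u where "u = (B - b) / (a - b)"
    have "0 \<le> u \<and> u \<le> 1"
      using False assms(4,5) unfolding a_def[symmetric] b_def[symmetric] u_def
      by (cases "a < b") (auto simp: divide_simps)
    moreover have "u * a + (1-u) * b = B"
    proof -
      have "u * (a - b) = B - b" using False unfolding u_def by simp
      then show ?thesis by (simp add: algebra_simps)
    qed
    ultimately show ?thesis using that by auto
  qed
  show ?thesis
    using S_conv[OF assms(1,2) u(1,2)] cost_conv[OF rs assms(3), of u] u(3) unfolding a_def b_def by blast
qed

lemma affine_root:
  fixes a b l m :: real
  assumes "a - l * b > 0" "a - m * b < 0"
  shows "\<exists>v. min l m < v \<and> v < max l m \<and> a - v * b = 0"
proof -
  have b: "b \<noteq> 0" using assms by auto
  show ?thesis
  proof (intro exI conjI)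
    show "a - (a/b) * b = 0" using b by simp
    show "min l m < a / b" "a / b < max l m"
    proof -
      have "(b > 0 \<and> l < a/b \<and> a/b < m) \<or> (b < 0 \<and> m < a/b \<and> a/b < l)"
        using assms b by (cases "b > 0") (auto simp: field_simps)
      then show "min l m < a / b" "a / b < max l m" by auto
    qed
  qed
qed

lemma S_exists:
  assumes "k \<ge> 1" "\<forall>i\<in>{1..k}. integrable M (q i)" "\<forall>i\<in>{1..k}. integrable M (c i)"
  shows "\<exists>s. s \<in> S_lam M k q c lam"
proof -
  define h where "h i x = q i x - lam * c i x" for i x
  define P where "P x i = (i \<in> {1..k} \<and> (\<forall>j\<in>{1..k}. h j x \<le> h i x) \<and> (\<forall>j\<in>{1..k}. j < i \<longrightarrow> h j x < h i x))" for x i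
  define g where "g x i = (if P x i then 1 else (0::real))" for x i
  have hm: "h i \<in> borel_measurable M" if "i \<in> {1..k}" for i
  proof -
    have "q i \<in> borel_measurable M" "c i \<in> borel_measurable M" using assms that by auto
    then show ?thesis unfolding h_def by measurable
  qed
  have meas: "(\<lambda>x. g x i) \<in> borel_measurable M" if "i \<in> {1..k}" for i
  proof -
    have "Measurable.pred M (\<lambda>x. h j x \<le> h i x)" if "j \<in> {1..k}" for j
      using hm[OF that] hm[OF \<open>i \<in> {1..k}\<close>] by measurable
    moreover have "Measurable.pred M (\<lambda>x. h j x < h i x)" if "j \<in> {1..k}" for j
      using hm[OF that] hm[OF \<open>i \<in> {1..k}\<close>] by measurable
    ultimately have "Measurable.pred M (\<lambda>x. P x i)"
      unfolding P_def by (intro pred_intros_logic pred_intros_finite) auto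
    then show ?thesis unfolding g_def by measurable
  qed
  have uniq: "\<exists>!i. P x i" for x
  proof -
    have ne: "h ` {1..k} \<noteq> {}" "finite (h ` {1..k})" using assms(1) by auto
    define mx where "mx = (MAX j\<in>{1..k}. h j x)"
    obtain i0 where i0: "i0 \<in> {1..k}" "h i0 x = mx"
      using Max_in[of "(\<lambda>j. h j x) ` {1..k}"] assms(1) unfolding mx_def by fastforce
    have ge: "h j x \<le> mx" if "j \<in> {1..k}" for j
      unfolding mx_def using that by (intro Max_ge) auto
    define i1 where "i1 = (LEAST i. i \<in> {1..k} \<and> h i x = mx)"
    have i1: "i1 \<in> {1..k} \<and> h i1 x = mx" unfolding i1_def by (rule LeastI[of _ i0]) (use i0 in auto)
    have i1l: "\<And>j. j \<in> {1..k} \<and> h j x = mx \<Longrightarrow> i1 \<le> j" unfolding i1_def by (rule Least_le)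
    have "P x i1" unfolding P_def
    proof (intro conjI ballI impI)
      show "i1 \<in> {1..k}" using i1 by auto
      fix j assume j: "j \<in> {1..k}"
      show "h j x \<le> h i1 x" using ge[OF j] i1 by auto
      assume "j < i1"
      then have "h j x \<noteq> mx" using i1l[of j] j by force
      then show "h j x < h i1 x" using ge[OF j] i1 by auto
    qed
    moreover have "i = i1" if "P x i" for i
    proof -
      have a: "i \<in> {1..k}" "\<forall>j\<in>{1..k}. h j x \<le> h i x" "\<forall>j\<in>{1..k}. j < i \<longrightarrow> h j x < h i x"
        using that unfolding P_def by auto
      have "h i x = mx" using a(1,2) ge[OF a(1)] i0 by force
      then have "i1 \<le> i" using i1l a(1) by auto
      moreover have "\<not> i1 < i" using a(3) i1 \<open>h i x = mx\<close> by auto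
      ultimately show ?thesis by auto
    qed
    ultimately show ?thesis by blast
  qed
  have rs: "routing_strategy M k g"
    unfolding routing_strategy_def
  proof (intro conjI ballI)
    fix i assume "i \<in> {1..k}" then show "(\<lambda>x. g x i) \<in> borel_measurable M" by (rule meas)
  next
    fix x i assume "x \<in> space M" "i \<in> {1..k}"
    show "0 \<le> g x i" unfolding g_def by auto
  next
    fix x assume "x \<in> space M"
    obtain i where i: "P x i" using uniq by blast
    have ik: "i \<in> {1..k}" using i unfolding P_def by auto
    have "(\<Sum>j=1..k. g x j) = (\<Sum>j=1..k. if j = i then 1 else 0)"
      unfolding g_def using uniq[of x] i by (intro sum.cong) auto
    also have "\<dots> = 1" using ik by simp
    finally show "(\<Sum>j=1..k. g x j) = 1" .
  qed
  have "g \<in> S_lam M k q c lam"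
    unfolding S_lam_def
  proof (intro CollectI conjI rs ballI impI)
    fix x i assume i: "i \<in> {1..k}" and lt: "q i x - lam * c i x < (MAX j\<in>{1..k}. q j x - lam * c j x)"
    have "\<not> P x i"
    proof
      assume "P x i"
      then have "\<forall>j\<in>{1..k}. h j x \<le> h i x" unfolding P_def by auto
      then have "(MAX j\<in>{1..k}. h j x) \<le> h i x" using assms(1) by (subst Max_le_iff) auto
      then show False using lt unfolding h_def by auto
    qed
    then show "g x i = 0" unfolding g_def by auto
  qed
  then show ?thesis by blast
qed

lemma between3:
  fixes a b g B :: real
  assumes "min a b \<le> B" "B \<le> max a b"
  shows "(min a g \<le> B \<and> B \<le> max a g) \<or> (min g b \<le> B \<and> B \<le> max g b)"
  using assms unfolding min_def max_def by (auto split: if_splits)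

lemma Lam_I:
  assumes "x \<in> space M" "i \<in> {1..k}" "j \<in> {1..k}" "i \<noteq> j" "q i x - v * c i x = q j x - v * c j x"
  shows "v \<in> Lam M k q c"
  unfolding Lam_def using assms by blast

lemma S_transfer:
  assumes "k \<ge> 1" "mu \<notin> Lam M k q c" "\<forall>v. min l mu < v \<and> v < max l mu \<longrightarrow> v \<notin> Lam M k q c"
    "s \<in> S_lam M k q c mu"
  shows "s \<in> S_lam M k q c l"
  unfolding S_lam_def
proof (intro CollectI conjI ballI impI)
  show "routing_strategy M k s" using assms(4) unfolding S_lam_def by auto
  fix x i assume x: "x \<in> space M" and i: "i \<in> {1..k}"
    and lt: "q i x - l * c i x < (MAX j\<in>{1..k}. q j x - l * c j x)"
  show "s x i = 0"
  proof (rule ccontr)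
    assume ne: "s x i \<noteq> 0"
    have ge: "\<not> q i x - mu * c i x < (MAX j\<in>{1..k}. q j x - mu * c j x)"
      using assms(4) x i ne unfolding S_lam_def by auto
    obtain j where j: "j \<in> {1..k}" "q j x - l * c j x = (MAX j\<in>{1..k}. q j x - l * c j x)"
      using Max_in[of "(\<lambda>j. q j x - l * c j x) ` {1..k}"] assms(1) by fastforce
    have lj: "q j x - l * c j x > q i x - l * c i x" using j lt by auto
    then have ij: "i \<noteq> j" by auto
    have mj: "q j x - mu * c j x \<le> (MAX j\<in>{1..k}. q j x - mu * c j x)"
      using j(1) by (intro Max_ge) auto
    show False
    proof (cases "q j x - mu * c j x = q i x - mu * c i x")
      case True
      then have "mu \<in> Lam M k q c" using Lam_I[OF x i j(1) ij] by simp
      then show False using assms(2) by auto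
    next
      case False
      then have "q j x - mu * c j x < q i x - mu * c i x" using ge mj by auto
      then obtain v where v: "min l mu < v" "v < max l mu"
          "(q j x - q i x) - v * (c j x - c i x) = 0"
        using affine_root[of "q j x - q i x" l "c j x - c i x" mu] lj by (auto simp: algebra_simps)
      then have "q i x - v * c i x = q j x - v * c j x" by (simp add: algebra_simps)
      then have "v \<in> Lam M k q c" using Lam_I[OF x i j(1) ij] by simp
      then show False using assms(3) v by auto
    qed
  qed
qed

lemma main_ind:
  assumes k: "k \<ge> 1" and iq: "\<forall>i\<in>{1..k}. integrable M (q i)" and ic: "\<forall>i\<in>{1..k}. integrable M (c i)"
    and fin: "finite (Lam M k q c)"
  shows "card (Lam M k q c \<inter> {l1<..<l2}) = n \<Longrightarrow> l1 < l2 \<Longrightarrow> s1 \<in> S_lam M k q c l1 \<Longrightarrow>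
    s2 \<in> S_lam M k q c l2 \<Longrightarrow> min (cost M k c s1) (cost M k c s2) \<le> B \<Longrightarrow>
    B \<le> max (cost M k c s1) (cost M k c s2) \<Longrightarrow>
    \<exists>lam\<in>{l1..l2}. \<exists>s\<in>S_lam M k q c lam. cost M k c s = B"
proof (induction n arbitrary: l1 l2 s1 s2 rule: less_induct)
  case (less n)
  show ?case
  proof (cases "Lam M k q c \<inter> {l1<..<l2} = {}")
    case True
    define mu where "mu = (l1 + l2) / 2"
    have mu: "l1 < mu" "mu < l2" using less.prems(2) unfolding mu_def by auto
    have nmu: "mu \<notin> Lam M k q c" using True mu by auto
    obtain g where g: "g \<in> S_lam M k q c mu" using S_exists[OF k iq ic] by blast
    have g1: "g \<in> S_lam M k q c l1"
      by (rule S_transfer[OF k nmu _ g]) (use True mu in auto)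
    have g2: "g \<in> S_lam M k q c l2"
      by (rule S_transfer[OF k nmu _ g]) (use True mu in auto)
    consider "min (cost M k c s1) (cost M k c g) \<le> B \<and> B \<le> max (cost M k c s1) (cost M k c g)"
      | "min (cost M k c g) (cost M k c s2) \<le> B \<and> B \<le> max (cost M k c g) (cost M k c s2)"
      using between3[OF less.prems(5,6)] by blast
    then show ?thesis
    proof cases
      case 1
      then obtain r where "r \<in> S_lam M k q c l1" "cost M k c r = B" using between_conv[OF less.prems(3) g1 ic] by blast
      then show ?thesis using less.prems(2) by (intro bexI[of _ l1]) auto
    next
      case 2
      then obtain r where "r \<in> S_lam M k q c l2" "cost M k c r = B" using between_conv[OF g2 less.prems(4) ic] by blast
      then show ?thesis using less.prems(2) by (intro bexI[of _ l2]) auto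
    qed
  next
    case False
    then obtain p where p: "p \<in> Lam M k q c" "l1 < p" "p < l2" by auto
    obtain sp where sp: "sp \<in> S_lam M k q c p" using S_exists[OF k iq ic] by blast
    have c1: "card (Lam M k q c \<inter> {l1<..<p}) < n"
      unfolding less.prems(1)[symmetric]
      by (rule psubset_card_mono) (use fin p in auto)
    have c2: "card (Lam M k q c \<inter> {p<..<l2}) < n"
      unfolding less.prems(1)[symmetric]
      by (rule psubset_card_mono) (use fin p in auto)
    consider "min (cost M k c s1) (cost M k c sp) \<le> B \<and> B \<le> max (cost M k c s1) (cost M k c sp)"
      | "min (cost M k c sp) (cost M k c s2) \<le> B \<and> B \<le> max (cost M k c sp) (cost M k c s2)"
      using between3[OF less.prems(5,6)] by blast
    then show ?thesis
    proof cases
      case 1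
      then obtain lam where "lam \<in> {l1..p}" "\<exists>s\<in>S_lam M k q c lam. cost M k c s = B"
        using less.IH[OF c1 refl p(2) less.prems(3) sp] by blast
      then show ?thesis using p by (intro bexI[of _ lam]) auto
    next
      case 2
      then obtain lam where "lam \<in> {p..l2}" "\<exists>s\<in>S_lam M k q c lam. cost M k c s = B"
        using less.IH[OF c2 refl p(3) sp less.prems(4)] by blast
      then show ?thesis using p by (intro bexI[of _ lam]) auto
    qed
  qed
qed

theorem lemma5:
  fixes M :: "'x measure" and k :: nat and q c :: "nat \<Rightarrow> 'x \<Rightarrow> real"
    and l1 l2 B :: real and s1 s2 :: "'x \<Rightarrow> nat \<Rightarrow> real"
  assumes "prob_space M"
    and "k \<ge> 1"
    and "\<forall>i\<in>{1..k}. integrable M (q i)"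
    and "\<forall>i\<in>{1..k}. integrable M (c i)"
    and "finite (Lam M k q c)"
    and "0 \<le> l1" and "l1 < l2"
    and "s1 \<in> S_lam M k q c l1" and "s2 \<in> S_lam M k q c l2"
    and "B \<in> {cost M k c s2 .. cost M k c s1}"
  shows "\<exists>lam\<in>{l1..l2}. \<exists>s\<in>S_lam M k q c lam. cost M k c s = B"
  by (rule main_ind[OF assms(2-5) refl assms(7-9)]) (use assms(10) in auto)

end
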